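(* Let $p$ be an odd prime and let $n,s$ be positive integers such that $2n/s\geq 3$ is an odd integer; put $q=p^n$, $d=p^s$. Fix $\mu\in\mathbb{F}_{q^2}\setminus\mathbb{F}_q$ such that $\mu^d=u_1+u_2\mu$ with $u_1,u_2\in\mathbb{F}_q$ and $u_2$ a $(d-1)$-th power in $\mathbb{F}_{q^2}$. Fix a partition $\mathbb{F}_q^*=\mathbb{F}_q^+\cup\mathbb{F}_q^-$ such that $a\in\mathbb{F}_q^+$ iff $-a\in\mathbb{F}_q^-$. Then \[ I^+=\{(a^d+a,\,x_1+x_2\mu): a,x_1\in\mathbb{F}_q,\ x_2\in\mathbb{F}_q^+\} \] is an independent set in $\mathcal{A}_{q^2,d}$, and likewise $I^-=\{(a^d+a,\,x_1+x_2\mu): a,x_1\in\mathbb{F}_q,\ x_2\in\mathbb{F}_q^-\}$ is an independent set in $\mathcal{A}_{q^2,d}$.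
   Context: The map $x\mapsto x^d+x$ is a bijection of $\mathbb{F}_{q^2}$. The graph $\mathcal{A}_{q^2,d}$ has vertex set $\mathbb{F}_{q^2}\times\mathbb{F}_{q^2}$; writing vertices as $(a^d+a,x)$ and $(b^d+b,y)$ with $a,b,x,y\in\mathbb{F}_{q^2}$ (uniquely), two distinct vertices are adjacent iff $a^db+ab^d=x+y$. $\mathbb{F}_q$ is the subfield of $\mathbb{F}_{q^2}$ of order $q$. *)

theory Defs
  imports "HOL-Computational_Algebra.Primes"
begin

definition subfield_of_order :: "nat \<Rightarrow> ('a::field) set" where
  "subfield_of_order q = {x. x ^ q = x}"

text \<open>Adjacency in the graph A_{q^2,d}: vertices are pairs (u,x); writing
  u = a^d + a and v = b^d + b (unique since x \<mapsto> x^d + x is a bijection),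
  distinct vertices (u,x),(v,y) are adjacent iff a^d b + a b^d = x + y.\<close>
definition A_adj :: "nat \<Rightarrow> ('a::field \<times> 'a) \<Rightarrow> ('a \<times> 'a) \<Rightarrow> bool" where
  "A_adj d P Q \<longleftrightarrow> P \<noteq> Q \<and>
     (\<exists>a b. fst P = a ^ d + a \<and> fst Q = b ^ d + b \<and> a ^ d * b + a * b ^ d = snd P + snd Q)"

definition A_independent :: "nat \<Rightarrow> ('a::field \<times> 'a) set \<Rightarrow> bool" where
  "A_independent d I \<longleftrightarrow> (\<forall>P\<in>I. \<forall>Q\<in>I. \<not> A_adj d P Q)"

end

theory Submission imports Defs begin

lemma geom_nat: "(x::nat) \<ge> 1 \<Longrightarrow> (x - 1) * (\<Sum>i<k. x^i) = x^k - 1"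
proof -
  assume "x \<ge> 1"
  have "int ((x - 1) * (\<Sum>i<k. x^i)) = (int x - 1) * (\<Sum>i<k. int x ^ i)"
    using \<open>x \<ge> 1\<close> by (simp add: of_nat_diff)
  also have "\<dots> = int x ^ k - 1" by (simp add: power_diff_1_eq)
  also have "\<dots> = int (x^k - 1)" using \<open>x \<ge> 1\<close> by (simp add: of_nat_diff)
  finally show ?thesis by linarith
qed

lemma geom_odd: "odd (x::nat) \<Longrightarrow> odd k \<Longrightarrow> odd (\<Sum>i<k. x^i)"
proof -
  assume "odd x"
  have "odd (\<Sum>i<k. x^i) \<longleftrightarrow> odd k" for k
    by (induction k) (auto simp: \<open>odd x\<close>)
  then show "odd k \<Longrightarrow> ?thesis" by blast
qed

lemma card_zero:
  shows "of_nat (card (UNIV::'a::{finite,ring_1} set)) = (0::'a)"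
proof -
  have "(\<Sum>y\<in>UNIV. y + 1) = (\<Sum>y\<in>(UNIV::'a set). y)"
    by (rule sum.reindex_bij_witness[of _ "\<lambda>y. y - 1" "\<lambda>y. y + 1"]) auto
  then show ?thesis by (simp add: sum.distrib)
qed

lemma unit_pow:
  fixes x :: "'a::{finite,field}"
  assumes "x \<noteq> 0"
  shows "x ^ (card (UNIV :: 'a set) - 1) = 1"
proof -
  have "(\<Prod>y\<in>UNIV-{0}. x * y) = x ^ (card (UNIV :: 'a set) - 1) * \<Prod>(UNIV-{0})"
    by (simp add: prod.distrib mult_ac)
  also have "(\<Prod>y\<in>UNIV-{0}. x * y) = (\<Prod>y\<in>UNIV-{0}. y)"
    by (rule prod.reindex_bij_witness[of _ "\<lambda>y. y / x" "\<lambda>y. x * y"]) (use assms in auto)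
  finally show ?thesis by simp
qed


lemma main:
  fixes p n s :: nat and \<mu> :: "'a::{field,finite}" and S :: "'a set"
  assumes "prime p" and "odd p" and "n > 0" and "s > 0"
    and "s dvd 2 * n" and "odd (2 * n div s)"
    and "card (UNIV :: 'a set) = (p ^ n) ^ 2"
    and "\<mu> \<notin> subfield_of_order (p ^ n)"
    and "S \<subseteq> subfield_of_order (p ^ n)"
    and "\<And>x y. x \<in> S \<Longrightarrow> y \<in> S \<Longrightarrow> x + y \<noteq> 0"
  shows "A_independent (p ^ s)
           {(a ^ (p ^ s) + a, x1 + x2 * \<mu>) | a x1 x2.
              a \<in> subfield_of_order (p ^ n) \<and> x1 \<in> subfield_of_order (p ^ n) \<and> x2 \<in> S}"
proof -
  define N where "N = card (UNIV :: 'a set)"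
  define F where "F = (subfield_of_order (p ^ n) :: 'a set)"
  define d where "d = p ^ s"
  have N: "N = p ^ (2*n)" using assms(7) by (simp add: N_def power_mult mult.commute)
  have "CHAR('a) > 0" by (rule finite_imp_CHAR_pos) simp
  hence pc: "prime CHAR('a)" by (rule prime_CHAR_semidom)
  have "of_nat N = (0::'a)" unfolding N_def by (rule card_zero)
  hence "CHAR('a) dvd N" by (simp only: of_nat_eq_0_iff_char_dvd)
  hence "CHAR('a) dvd p ^ (2*n)" using N by simp
  hence "CHAR('a) dvd p" using pc prime_dvd_power by blast
  hence charp: "CHAR('a) = p" using pc assms(1) by (simp add: primes_dvd_imp_eq)
  have frob: "(x + y) ^ (p ^ k) = x ^ (p ^ k) + y ^ (p ^ k)" for x y :: 'a and k
    by (rule freshmans_dream') (use pc charp in auto)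
  have oddpk: "odd (p ^ k)" for k using assms(2) by simp
  have neg: "(- x) ^ (p ^ k) = - (x ^ (p ^ k))" for x :: 'a and k
    using oddpk[of k] by (simp add: power_minus_odd)
  have sub: "(x - y) ^ (p ^ k) = x ^ (p ^ k) - y ^ (p ^ k)" for x y :: 'a and k
    using frob[of x "-y" k] neg[of y k] by simp
  have Fadd: "x \<in> F \<Longrightarrow> y \<in> F \<Longrightarrow> x + y \<in> F" for x y
    by (simp add: F_def subfield_of_order_def frob)
  have Fsub: "x \<in> F \<Longrightarrow> y \<in> F \<Longrightarrow> x - y \<in> F" for x y
    by (simp add: F_def subfield_of_order_def sub)
  have Fmul: "x \<in> F \<Longrightarrow> y \<in> F \<Longrightarrow> x * y \<in> F" for x y
    by (simp add: F_def subfield_of_order_def power_mult_distrib)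
  have Fdiv: "x \<in> F \<Longrightarrow> y \<in> F \<Longrightarrow> x / y \<in> F" for x y
    by (simp add: F_def subfield_of_order_def power_divide)
  have Fpow: "x \<in> F \<Longrightarrow> x ^ k \<in> F" for x k
    by (simp add: F_def subfield_of_order_def flip: power_mult) (metis mult.commute power_mult)
  obtain k where k: "2 * n = s * k" using assms(5) by blast
  have oddk: "odd k" using assms(4,6) k by simp
  define m where "m = (\<Sum>i<k. d^i)"
  have d1: "d \<ge> 1" using assms(1) prime_gt_0_nat unfolding d_def by (simp add: Suc_leI)
  have dm: "(d - 1) * m = N - 1"
    unfolding m_def using geom_nat[OF d1, of k] N k by (simp add: d_def power_mult)
  have oddm: "odd m" unfolding m_def d_def by (rule geom_odd) (use oddpk oddk in auto)
  have inj: "a ^ d + a = b ^ d + b \<Longrightarrow> a = b" for a b :: 'a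
  proof (rule ccontr)
    assume h: "a ^ d + a = b ^ d + b" "a \<noteq> b"
    define c where "c = a - b"
    have c0: "c \<noteq> 0" using h by (simp add: c_def)
    have "c ^ d = a ^ d - b ^ d" by (simp add: c_def d_def sub)
    moreover have "a ^ d - b ^ d = b - a" using h(1) by (metis add_diff_cancel_left add_diff_cancel_right diff_diff_eq2 add.commute)
    ultimately have "c ^ d = - c" by (simp add: c_def)
    hence "c * c ^ (d - 1) = c * (-1)" using d1
      by (metis mult_minus1_right power_eq_if not_one_le_zero)
    hence cd: "c ^ (d - 1) = -1" using c0 mult_left_cancel by blast
    have "c ^ (N - 1) = 1" unfolding N_def by (rule unit_pow[OF c0])
    hence "(c ^ (d - 1)) ^ m = 1" using dm by (simp flip: power_mult)
    hence "(-1::'a) = 1" using cd oddm by simp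
    hence "of_nat 2 = (0::'a)" by (simp add: eq_neg_iff_add_eq_0)
    hence "p dvd 2" using charp by (simp only: of_nat_eq_0_iff_char_dvd)
    hence "p = 2" using assms(1) by (metis prime_nat_iff two_is_prime_nat prime_gt_1_nat dvd_refl primes_dvd_imp_eq)
    thus False using assms(2) by simp
  qed
  show ?thesis
    unfolding A_independent_def
  proof (intro ballI notI)
    fix P Q assume PI: "P \<in> {(a ^ (p ^ s) + a, x1 + x2 * \<mu>) | a x1 x2.
              a \<in> subfield_of_order (p ^ n) \<and> x1 \<in> subfield_of_order (p ^ n) \<and> x2 \<in> S}"
      and QI: "Q \<in> {(a ^ (p ^ s) + a, x1 + x2 * \<mu>) | a x1 x2.
              a \<in> subfield_of_order (p ^ n) \<and> x1 \<in> subfield_of_order (p ^ n) \<and> x2 \<in> S}"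
      and adj: "A_adj (p ^ s) P Q"
    from PI obtain a x1 x2 where P: "P = (a ^ d + a, x1 + x2 * \<mu>)" "a \<in> F" "x1 \<in> F" "x2 \<in> S"
      by (auto simp: F_def d_def)
    from QI obtain b y1 y2 where Q: "Q = (b ^ d + b, y1 + y2 * \<mu>)" "b \<in> F" "y1 \<in> F" "y2 \<in> S"
      by (auto simp: F_def d_def)
    from adj obtain a' b' where ab: "a ^ d + a = a' ^ d + a'" "b ^ d + b = b' ^ d + b'"
       "a' ^ d * b' + a' * b' ^ d = (x1 + x2 * \<mu>) + (y1 + y2 * \<mu>)"
      by (auto simp: A_adj_def P Q d_def)
    have "a' = a" "b' = b" using inj ab(1,2) by metis+
    hence e: "a ^ d * b + a * b ^ d = (x1 + y1) + (x2 + y2) * \<mu>" using ab(3) by (simp add: algebra_simps)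
    have nz: "x2 + y2 \<noteq> 0" using assms(10) P(4) Q(4) by blast
    have x2F: "x2 \<in> F" "y2 \<in> F" using assms(9) P(4) Q(4) by (auto simp: F_def)
    have "\<mu> = (a ^ d * b + a * b ^ d - (x1 + y1)) / (x2 + y2)"
      using e nz by (simp add: field_simps)
    also have "\<dots> \<in> F" using P Q x2F by (intro Fdiv Fsub Fadd Fmul Fpow) auto
    finally show False using assms(8) by (simp add: F_def)
  qed
qed

theorem lemma7:
  fixes p n s :: nat and \<mu> u1 u2 :: "'a::{field,finite}"
    and Fplus Fminus :: "'a set"
  assumes "prime p" and "odd p" and "n > 0" and "s > 0"
    and "s dvd 2 * n" and "odd (2 * n div s)" and "2 * n div s \<ge> 3"
    and "card (UNIV :: 'a set) = (p ^ n) ^ 2"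
    and "\<mu> \<notin> subfield_of_order (p ^ n)"
    and "u1 \<in> subfield_of_order (p ^ n)" and "u2 \<in> subfield_of_order (p ^ n)"
    and "\<mu> ^ (p ^ s) = u1 + u2 * \<mu>"
    and "\<exists>w::'a. u2 = w ^ (p ^ s - 1)"
    and "Fplus \<union> Fminus = subfield_of_order (p ^ n) - {0}"
    and "Fplus \<inter> Fminus = {}"
    and "\<forall>a \<in> subfield_of_order (p ^ n) - {0}. a \<in> Fplus \<longleftrightarrow> - a \<in> Fminus"
  shows "A_independent (p ^ s)
           {(a ^ (p ^ s) + a, x1 + x2 * \<mu>) | a x1 x2.
              a \<in> subfield_of_order (p ^ n) \<and> x1 \<in> subfield_of_order (p ^ n) \<and> x2 \<in> Fplus}
       \<and> A_independent (p ^ s)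
           {(a ^ (p ^ s) + a, x1 + x2 * \<mu>) | a x1 x2.
              a \<in> subfield_of_order (p ^ n) \<and> x1 \<in> subfield_of_order (p ^ n) \<and> x2 \<in> Fminus}"
proof -
  have sub: "Fplus \<subseteq> subfield_of_order (p ^ n)" "Fminus \<subseteq> subfield_of_order (p ^ n)"
    using assms(14) by auto
  have np: "x + y \<noteq> 0" if "x \<in> Fplus" "y \<in> Fplus" for x y
  proof
    assume "x + y = 0"
    hence y: "y = - x" by (metis add.commute add_eq_0_iff)
    have "x \<in> subfield_of_order (p ^ n) - {0}" using that assms(14) by auto
    hence "- x \<in> Fminus" using assms(16) that by blast
    thus False using y that assms(15) by auto
  qed
  have nm: "x + y \<noteq> 0" if "x \<in> Fminus" "y \<in> Fminus" for x y
  proof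
    assume "x + y = 0"
    hence y: "- y = x" by (metis add.commute add_eq_0_iff)
    have "y \<in> subfield_of_order (p ^ n) - {0}" using that assms(14) by auto
    hence "y \<in> Fplus" using assms(16) that y by auto
    thus False using that assms(15) by auto
  qed
  show ?thesis
    using main[OF assms(1-6,8,9) sub(1) np] main[OF assms(1-6,8,9) sub(2) nm] by blast
qed

end
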